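(* Let $(X_n)_{n\ge0}$ be a real-valued process adapted to a filtration $(\mathcal F_n)$ with $\limsup_{n\to\infty}|X_n|=\infty$ a.s. Let $f:\mathbb R\to\mathbb R_+$ satisfy $\sup_x f(x)<\infty$, $\lim_{x\to+\infty}f(x)=0$, and $\inf_{y\le x}f(y)>0$ for every $x\in\mathbb R_+$. Suppose there exists $x_1\in\mathbb R_+$ such that for all $n\ge0$, $$\mathbb E[f(X_{n+1})-f(X_n)\mid\mathcal F_n]\le0\ \text{on }\{X_n>x_1\},\qquad \mathbb E[f(-X_{n+1})-f(-X_n)\mid\mathcal F_n]\le0\ \text{on }\{X_n<-x_1\}.$$ Then $\lim_{n\to\infty}X_n\in\{-\infty,+\infty\}$ a.s. *)

theory Defs
  imports "HOL-Probability.Probability"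
begin

end

theory Submission
  imports Defs
begin

lemma key:
  fixes M :: "'a measure" and F :: "nat \<Rightarrow> 'a measure"
    and X :: "nat \<Rightarrow> 'a \<Rightarrow> real" and f :: "real \<Rightarrow> real"
  assumes prob: "prob_space M"
    and subalg: "\<And>n. subalgebra M (F n)"
    and filt_mono: "\<And>n m. n \<le> m \<Longrightarrow> sets (F n) \<subseteq> sets (F m)"
    and adapted: "\<And>n. X n \<in> borel_measurable (F n)"
    and f_meas: "f \<in> borel_measurable borel"
    and f_nonneg: "\<And>x. f x \<ge> 0"
    and fB: "\<And>x. f x \<le> B"
    and Kx1: "x1 \<le> K" and bK: "K < b" and dpos: "\<delta> > 0"
    and fK: "\<And>y. y \<le> K \<Longrightarrow> \<delta> \<le> f y" and fb: "\<And>y. b < y \<Longrightarrow> f y \<le> \<epsilon>"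
    and drift_pos: "\<And>n. AE \<omega> in M. X n \<omega> > x1 \<longrightarrow>
        real_cond_exp M (F n) (\<lambda>\<omega>. f (X (Suc n) \<omega>) - f (X n \<omega>)) \<omega> \<le> 0"
  shows "{\<omega>\<in>space M. \<exists>j i. j < i \<and> b < X j \<omega> \<and> X i \<omega> \<le> K} \<in> sets M \<and>
         measure M {\<omega>\<in>space M. \<exists>j i. j < i \<and> b < X j \<omega> \<and> X i \<omega> \<le> K} \<le> \<epsilon> / \<delta>"
proof -
  interpret prob_space M by (rule prob)
  have spF: "\<And>n. space (F n) = space M" using subalg by (simp add: subalgebra_def)
  have Xm: "X j \<in> borel_measurable (F n)" if "j \<le> n" for j n
  proof -
    have "subalgebra (F n) (F j)" using filt_mono[OF that] spF by (simp add: subalgebra_def)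
    then show ?thesis using measurable_from_subalg adapted by blast
  qed
  have XM[measurable]: "\<And>n. X n \<in> borel_measurable M" using measurable_from_subalg[OF subalg adapted] .
  note f_meas[measurable]
  have eps0: "\<epsilon> \<ge> 0" using fb[of "b+1"] f_nonneg[of "b+1"] by simp
  define H where "H n = {\<omega>\<in>space M. \<exists>j\<le>n. b < X j \<omega>}" for n
  define D where "D n = {\<omega>\<in>space M. \<exists>j i. j < i \<and> i \<le> n \<and> b < X j \<omega> \<and> X i \<omega> \<le> K}" for n
  define L where "L n = H n - D n" for n
  have HF: "H n \<in> sets (F n)" for n
  proof -
    have "H n = (\<Union>j\<in>{..n}. {\<omega>\<in>space (F n). b < X j \<omega>})" unfolding H_def spF by auto
    also have "\<dots> \<in> sets (F n)"
    proof (intro sets.finite_UN)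
      fix j assume "j \<in> {..n}"
      then have [measurable]: "X j \<in> borel_measurable (F n)" using Xm by auto
      show "{\<omega>\<in>space (F n). b < X j \<omega>} \<in> sets (F n)" by measurable
    qed auto
    finally show ?thesis .
  qed
  have DF: "D n \<in> sets (F n)" for n
  proof -
    have "D n = (\<Union>i\<in>{..n}. \<Union>j\<in>{..<i}. {\<omega>\<in>space (F n). b < X j \<omega> \<and> X i \<omega> \<le> K})"
      unfolding D_def spF by auto
    also have "\<dots> \<in> sets (F n)"
    proof (intro sets.finite_UN)
      fix i j assume "i \<in> {..n}" "j \<in> {..<i}"
      then have [measurable]: "X j \<in> borel_measurable (F n)" "X i \<in> borel_measurable (F n)"
        using Xm by auto
      show "{\<omega>\<in>space (F n). b < X j \<omega> \<and> X i \<omega> \<le> K} \<in> sets (F n)" by measurable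
    qed auto
    finally show ?thesis .
  qed
  have LF: "L n \<in> sets (F n)" for n unfolding L_def using HF DF by auto
  have FM: "A \<in> sets (F n) \<Longrightarrow> A \<in> sets M" for A n using subalg[of n] by (auto simp: subalgebra_def)
  have HM[measurable]: "H n \<in> sets M" and DM[measurable]: "D n \<in> sets M" and LM[measurable]: "L n \<in> sets M" for n
    using FM HF DF LF by auto
  have Lgt: "K < X n \<omega>" if "\<omega> \<in> L n" for n \<omega>
  proof (rule ccontr)
    assume c: "\<not> K < X n \<omega>"
    from that obtain j where j: "j \<le> n" "b < X j \<omega>" and sp: "\<omega> \<in> space M" unfolding L_def H_def by auto
    have "j \<noteq> n" using j c bK by auto
    then have "j < n" using j by simp
    then have "\<omega> \<in> D n" using j c sp unfolding D_def not_less by blast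
    then show False using that unfolding L_def by auto
  qed
  have HS: "\<omega> \<in> H (Suc n) \<longleftrightarrow> \<omega> \<in> H n \<or> (\<omega> \<in> space M \<and> b < X (Suc n) \<omega>)" for n \<omega>
    unfolding H_def by (auto simp: le_Suc_eq)
  have DS: "\<omega> \<in> D (Suc n) \<longleftrightarrow> \<omega> \<in> D n \<or> (\<omega> \<in> H n \<and> X (Suc n) \<omega> \<le> K)" for n \<omega>
    unfolding D_def H_def
    apply (auto simp: le_Suc_eq less_Suc_eq_le)
    by (metis le_SucE less_Suc_eq_le)
  have DH: "D n \<subseteq> H n" for n unfolding D_def H_def by (auto, meson less_imp_le_nat order_trans)
  define P where "P n \<omega> = f (X n \<omega>) * indicator (L n) \<omega> + \<delta> * indicator (D n) \<omega> - \<epsilon> * indicator (H n) \<omega>" for n \<omega>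
  have bnd_int: "integrable M g" if "g \<in> borel_measurable M" "\<And>\<omega>. \<bar>g \<omega>\<bar> \<le> C" for g :: "'a \<Rightarrow> real" and C
    using integrable_const_bound[of g C] that by auto
  have Pm[measurable]: "P n \<in> borel_measurable M" for n unfolding P_def by measurable
  have Pb: "\<bar>P n \<omega>\<bar> \<le> B + \<delta> + \<epsilon>" for n \<omega>
    using f_nonneg[of "X n \<omega>"] fB[of "X n \<omega>"] dpos eps0
    unfolding P_def by (auto simp: indicator_def)
  have Pint: "integrable M (P n)" for n by (rule bnd_int[OF Pm Pb])
  have P0: "integral\<^sup>L M (P 0) \<le> 0"
  proof -
    have "integral\<^sup>L M (P 0) \<le> integral\<^sup>L M (\<lambda>_. 0::real)"
    proof (rule integral_mono_AE[OF Pint], simp, rule AE_I2)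
      fix \<omega> assume "\<omega> \<in> space M"
      have "D 0 = {}" unfolding D_def by auto
      moreover have "\<omega> \<in> L 0 \<Longrightarrow> f (X 0 \<omega>) \<le> \<epsilon>" using fb unfolding L_def H_def by auto
      ultimately show "P 0 \<omega> \<le> 0" unfolding P_def L_def by (auto simp: indicator_def)
    qed
    then show ?thesis by simp
  qed
  have Pstep: "integral\<^sup>L M (P (Suc n)) \<le> integral\<^sup>L M (P n)" for n
  proof -
    define g where "g \<omega> = f (X (Suc n) \<omega>) - f (X n \<omega>)" for \<omega>
    have gm[measurable]: "g \<in> borel_measurable M" unfolding g_def by measurable
    have im[measurable]: "indicator (L n) \<in> borel_measurable (F n)" using LF by simp
    have gi: "integrable M (\<lambda>\<omega>. indicator (L n) \<omega> * g \<omega>)"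
    proof (rule bnd_int[of _ "2*B"])
      show "(\<lambda>\<omega>. indicator (L n) \<omega> * g \<omega>) \<in> borel_measurable M" by measurable
      fix \<omega> show "\<bar>indicator (L n) \<omega> * g \<omega>\<bar> \<le> 2*B"
        using f_nonneg[of "X (Suc n) \<omega>"] fB[of "X (Suc n) \<omega>"] f_nonneg[of "X n \<omega>"] fB[of "X n \<omega>"]
        by (auto simp: indicator_def g_def)
    qed
    have "finite_measure_subalgebra M (F n)"
      unfolding finite_measure_subalgebra_def finite_measure_subalgebra_axioms_def
      using subalg finite_measure_axioms by auto
    then have sfs: "sigma_finite_subalgebra M (F n)" by (rule finite_measure_subalgebra_is_sigma_finite)
    note ce = sigma_finite_subalgebra.real_cond_exp_intg[OF sfs gi im gm]
    have "(\<integral>\<omega>. indicator (L n) \<omega> * g \<omega> \<partial>M) \<le> 0"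
    proof -
      have "(\<integral>\<omega>. indicator (L n) \<omega> * real_cond_exp M (F n) g \<omega> \<partial>M) \<le> integral\<^sup>L M (\<lambda>_. 0::real)"
      proof (rule integral_mono_AE[OF ce(1)], simp)
        show "AE \<omega> in M. indicator (L n) \<omega> * real_cond_exp M (F n) g \<omega> \<le> 0"
          using drift_pos[of n]
        proof eventually_elim
          case (elim \<omega>)
          show ?case
          proof (cases "\<omega> \<in> L n")
            case True
            then have "x1 < X n \<omega>" using Lgt Kx1 by force
            then show ?thesis using elim True unfolding g_def by simp
          qed simp
        qed
      qed
      then show ?thesis using ce(2) by simp
    qed
    moreover have "integral\<^sup>L M (P (Suc n)) \<le> (\<integral>\<omega>. P n \<omega> + indicator (L n) \<omega> * g \<omega> \<partial>M)"
    proof (rule integral_mono_AE)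
      show "integrable M (P (Suc n))" by (rule Pint)
      show "integrable M (\<lambda>\<omega>. P n \<omega> + indicator (L n) \<omega> * g \<omega>)" using Pint[of n] gi by (rule Bochner_Integration.integrable_add)
      show "AE \<omega> in M. P (Suc n) \<omega> \<le> P n \<omega> + indicator (L n) \<omega> * g \<omega>"
      proof (rule AE_I2)
      fix \<omega> assume sp: "\<omega> \<in> space M"
      have Ls: "\<omega> \<in> L m \<longleftrightarrow> \<omega> \<in> H m \<and> \<omega> \<notin> D m" for m unfolding L_def by auto
      show "P (Suc n) \<omega> \<le> P n \<omega> + indicator (L n) \<omega> * g \<omega>"
        using HS[of \<omega> n] DS[of \<omega> n] DH[of n] fK[of "X (Suc n) \<omega>"] fb[of "X (Suc n) \<omega>"] sp bK dpos
        unfolding P_def g_def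
        by (cases "\<omega> \<in> H n"; cases "\<omega> \<in> D n"; cases "X (Suc n) \<omega> \<le> K"; cases "b < X (Suc n) \<omega>")
           (auto simp: indicator_def Ls HS DS f_nonneg)
    qed
    qed
    moreover have "(\<integral>\<omega>. P n \<omega> + indicator (L n) \<omega> * g \<omega> \<partial>M) = integral\<^sup>L M (P n) + (\<integral>\<omega>. indicator (L n) \<omega> * g \<omega> \<partial>M)"
      by (rule Bochner_Integration.integral_add[OF Pint gi])
    ultimately show ?thesis by linarith
  qed
  have Pn: "integral\<^sup>L M (P n) \<le> 0" for n
    by (induction n) (use P0 Pstep in \<open>auto intro: order_trans\<close>)
  have Dle: "measure M (D n) \<le> \<epsilon> / \<delta>" for n
  proof -
    have "(\<integral>\<omega>. \<delta> * indicator (D n) \<omega> - \<epsilon> \<partial>M) \<le> integral\<^sup>L M (P n)"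
    proof (rule integral_mono_AE)
      show "integrable M (\<lambda>\<omega>. \<delta> * indicator (D n) \<omega> - \<epsilon>)"
        apply (rule bnd_int[of _ "\<delta>+\<epsilon>"]) apply measurable using dpos eps0 by (auto simp: indicator_def)
      show "AE \<omega> in M. \<delta> * indicator (D n) \<omega> - \<epsilon> \<le> P n \<omega>"
        using f_nonneg eps0 unfolding P_def by (intro AE_I2) (auto simp: indicator_def intro: order_trans[OF _ f_nonneg])
    qed (rule Pint)
    moreover have "(\<integral>\<omega>. \<delta> * indicator (D n) \<omega> - \<epsilon> \<partial>M) = \<delta> * measure M (D n) - \<epsilon>"
    proof -
      have "(\<integral>\<omega>. \<delta> * indicator (D n) \<omega> - \<epsilon> \<partial>M) = (\<integral>\<omega>. \<delta> * indicator (D n) \<omega> \<partial>M) - (\<integral>\<omega>. \<epsilon> \<partial>M)"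
      proof (rule Bochner_Integration.integral_diff)
        have "integrable M (indicator (D n) :: _ \<Rightarrow> real)"
          by (rule integrable_real_indicator) (use DM[of n] emeasure_finite[of "D n"] in \<open>auto simp: less_top[symmetric]\<close>)
        then show "integrable M (\<lambda>\<omega>. \<delta> * indicator (D n) \<omega>)" by (rule integrable_mult_right) 
      qed simp
      also have "\<dots> = \<delta> * measure M (D n) - \<epsilon>"
        using DM[of n] by (simp add: Int_absorb2 sets.sets_into_space prob_space)
      finally show ?thesis .
    qed
    ultimately have "\<delta> * measure M (D n) \<le> \<epsilon>" using Pn[of n] by linarith
    then show ?thesis using dpos by (simp add: field_simps mult.commute)
  qed
  have Eeq: "{\<omega>\<in>space M. \<exists>j i. j < i \<and> b < X j \<omega> \<and> X i \<omega> \<le> K} = (\<Union>n. D n)"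
    unfolding D_def by blast
  have inc: "incseq D" unfolding incseq_def D_def by fastforce
  have lim: "(\<lambda>n. measure M (D n)) \<longlonglongrightarrow> measure M (\<Union>n. D n)"
    by (rule finite_Lim_measure_incseq) (use inc in auto)
  have "measure M (\<Union>n. D n) \<le> \<epsilon> / \<delta>" by (rule LIMSEQ_le_const2[OF lim]) (use Dle in auto)
  then show ?thesis unfolding Eeq by auto
qed


theorem lemma3p5:
  fixes M :: "'a measure" and F :: "nat \<Rightarrow> 'a measure"
    and X :: "nat \<Rightarrow> 'a \<Rightarrow> real" and f :: "real \<Rightarrow> real" and x1 :: real
  assumes prob: "prob_space M"
    and subalg: "\<And>n. subalgebra M (F n)"
    and filt_mono: "\<And>n m. n \<le> m \<Longrightarrow> sets (F n) \<subseteq> sets (F m)"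
    and adapted: "\<And>n. X n \<in> borel_measurable (F n)"
    and limsup_inf: "AE \<omega> in M. limsup (\<lambda>n. ereal \<bar>X n \<omega>\<bar>) = \<infinity>"
    and f_meas: "f \<in> borel_measurable borel"
    and f_nonneg: "\<And>x. f x \<ge> 0"
    and f_bdd: "bdd_above (range f)"
    and f_lim: "(f \<longlongrightarrow> 0) at_top"
    and f_inf_pos: "\<And>x. x \<ge> 0 \<Longrightarrow> Inf (f ` {..x}) > 0"
    and x1_nonneg: "x1 \<ge> 0"
    and drift_pos: "\<And>n. AE \<omega> in M. X n \<omega> > x1 \<longrightarrow>
        real_cond_exp M (F n) (\<lambda>\<omega>. f (X (Suc n) \<omega>) - f (X n \<omega>)) \<omega> \<le> 0"
    and drift_neg: "\<And>n. AE \<omega> in M. X n \<omega> < - x1 \<longrightarrow>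
        real_cond_exp M (F n) (\<lambda>\<omega>. f (- X (Suc n) \<omega>) - f (- X n \<omega>)) \<omega> \<le> 0"
  shows "AE \<omega> in M. filterlim (\<lambda>n. X n \<omega>) at_top sequentially
                   \<or> filterlim (\<lambda>n. X n \<omega>) at_bot sequentially"
  proof -
  interpret prob_space M by (rule prob)
  obtain B where fB: "\<And>x. f x \<le> B" using f_bdd unfolding bdd_above_def by auto
  define Kk where "Kk k = x1 + real k" for k :: nat
  have Kk0: "0 \<le> Kk k" "x1 \<le> Kk k" for k unfolding Kk_def using x1_nonneg by auto
  define \<delta> where "\<delta> K = Inf (f ` {..K})" for K
  have dpos: "\<delta> (Kk k) > 0" for k unfolding \<delta>_def using f_inf_pos Kk0 by auto
  have fK: "\<delta> K \<le> f y" if "y \<le> K" for y K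
    unfolding \<delta>_def by (rule cInf_lower) (use that f_nonneg in \<open>auto intro!: bdd_belowI2[where m=0]\<close>)
  have bex: "\<exists>b. K < b \<and> (\<forall>y. b < y \<longrightarrow> f y \<le> 1 / real (Suc m))" for K m
  proof -
    have "eventually (\<lambda>y. f y < 1 / real (Suc m)) at_top"
      by (rule order_tendstoD(2)[OF f_lim]) simp
    then obtain N where N: "\<And>y. y \<ge> N \<Longrightarrow> f y < 1 / real (Suc m)"
      unfolding eventually_at_top_linorder by auto
    show ?thesis
    proof (rule exI[of _ "max N (K+1)"], intro conjI allI impI)
      fix y assume "max N (K+1) < y"
      then have "N \<le> y" by simp
      from N[OF this] show "f y \<le> 1 / real (Suc m)" by simp
    qed simp
  qed
  define bb where "bb K m = (SOME b. K < b \<and> (\<forall>y. b < y \<longrightarrow> f y \<le> 1 / real (Suc m)))" for K m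
  have bbp: "K < bb K m" "\<And>y. bb K m < y \<Longrightarrow> f y \<le> 1 / real (Suc m)" for K m
    using someI_ex[OF bex[of K m]] unfolding bb_def by auto
  define Ep where "Ep Y b K = {\<omega>\<in>space M. \<exists>j i. j < i \<and> b < Y j \<omega> \<and> Y i \<omega> \<le> K}"
    for Y :: "nat \<Rightarrow> 'a \<Rightarrow> real" and b K
  have keyP: "Ep X (bb (Kk k) m) (Kk k) \<in> sets M \<and> measure M (Ep X (bb (Kk k) m) (Kk k)) \<le> (1 / real (Suc m)) / \<delta> (Kk k)" for k m
    unfolding Ep_def
    by (rule key[where M=M and F=F and X=X and f=f and B=B and K="Kk k" and b="bb (Kk k) m" and \<delta>="\<delta> (Kk k)" and \<epsilon>="1 / real (Suc m)", OF prob subalg filt_mono adapted f_meas f_nonneg fB Kk0(2)[of k] bbp(1)[of "Kk k" m] dpos[of k] fK bbp(2)[of "Kk k" m] drift_pos])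
  have adN: "(\<lambda>\<omega>. - X n \<omega>) \<in> borel_measurable (F n)" for n
    using adapted[of n] by measurable
  have drN: "AE \<omega> in M. x1 < - X n \<omega> \<longrightarrow>
        real_cond_exp M (F n) (\<lambda>\<omega>. f (- X (Suc n) \<omega>) - f (- X n \<omega>)) \<omega> \<le> 0" for n
    using drift_neg[of n] by eventually_elim auto
  have keyN: "Ep (\<lambda>n \<omega>. - X n \<omega>) (bb (Kk k) m) (Kk k) \<in> sets M \<and> measure M (Ep (\<lambda>n \<omega>. - X n \<omega>) (bb (Kk k) m) (Kk k)) \<le> (1 / real (Suc m)) / \<delta> (Kk k)" for k m
    unfolding Ep_def
    by (rule key[where M=M and F=F and X="\<lambda>n \<omega>. - X n \<omega>" and f=f and B=B and K="Kk k" and b="bb (Kk k) m" and \<delta>="\<delta> (Kk k)" and \<epsilon>="1 / real (Suc m)", OF prob subalg filt_mono adN f_meas f_nonneg fB Kk0(2)[of k] bbp(1)[of "Kk k" m] dpos[of k] fK bbp(2)[of "Kk k" m] drN])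
  have zero: "x \<le> 0" if "\<And>m. x \<le> (1 / real (Suc m)) / d" "d > 0" for x d :: real
  proof (rule ccontr)
    assume "\<not> x \<le> 0"
    then have xp: "x > 0" by simp
    obtain m where m: "1 / (x * d) < real m" using reals_Archimedean2 by blast
    have "1 / (x * d) < real (Suc m)" using m by simp
    then have h: "1 < x * (real (Suc m) * d)" using xp \<open>d > 0\<close> by (simp add: field_simps)
    have pos: "0 < real (Suc m) * d" using \<open>d > 0\<close> by simp
    have "1 / (real (Suc m) * d) < x" using h pos by (simp add: divide_less_eq mult.commute)
    then have "(1 / real (Suc m)) / d < x" by simp
    then show False using that(1)[of m] by simp
  qed
  have nullI: "(\<Inter>m. A m) \<in> null_sets M" if "\<And>m. A m \<in> sets M \<and> measure M (A m) \<le> (1 / real (Suc m)) / d" "d > 0" for A d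
  proof -
    have S: "(\<Inter>m. A m) \<in> sets M" using that(1) by (intro sets.countable_INT') auto
    have "measure M (\<Inter>m. A m) \<le> (1 / real (Suc m)) / d" for m
    proof -
      have "(\<Inter>m. A m) \<subseteq> A m" by blast
      then show ?thesis using finite_measure_mono[of "\<Inter>m. A m" "A m"] that(1)[of m] by linarith
    qed
    then have "measure M (\<Inter>m. A m) \<le> 0" using zero that(2) by blast
    then have "measure M (\<Inter>m. A m) = 0" by (simp add: measure_nonneg antisym)
    then show ?thesis using S by (auto simp: emeasure_eq_measure)
  qed
  define Np where "Np k = (\<Inter>m. Ep X (bb (Kk k) m) (Kk k))" for k
  define Nn where "Nn k = (\<Inter>m. Ep (\<lambda>n \<omega>. - X n \<omega>) (bb (Kk k) m) (Kk k))" for k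
  have "AE \<omega> in M. \<omega> \<notin> Np k \<and> \<omega> \<notin> Nn k" for k
    unfolding Np_def Nn_def
    using AE_not_in[OF nullI[OF keyP dpos]] AE_not_in[OF nullI[OF keyN dpos]] by (simp add: AE_conj_iff)
  then have aeN: "AE \<omega> in M. \<forall>k. \<omega> \<notin> Np k \<and> \<omega> \<notin> Nn k" by (simp add: AE_all_countable)
  show ?thesis using AE_space limsup_inf aeN
  proof eventually_elim
    case (elim \<omega>)
    then have sp: "\<omega> \<in> space M" and ls: "limsup (\<lambda>n. ereal \<bar>X n \<omega>\<bar>) = \<infinity>"
      and nn: "\<And>k. \<omega> \<notin> Np k" "\<And>k. \<omega> \<notin> Nn k" by auto
    have big: "\<exists>n. c < \<bar>X n \<omega>\<bar>" for c
    proof (rule ccontr)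
      assume "\<not> (\<exists>n. c < \<bar>X n \<omega>\<bar>)"
      then have "\<forall>n. ereal \<bar>X n \<omega>\<bar> \<le> ereal c" by (auto simp: not_less)
      then have "limsup (\<lambda>n. ereal \<bar>X n \<omega>\<bar>) \<le> ereal c" by (intro Limsup_bounded) auto
      then show False using ls by simp
    qed
    have kZ: "\<exists>k. Z \<le> Kk k" for Z
    proof -
      obtain k where "Z - x1 \<le> real k" using real_arch_simple by blast
      then show ?thesis unfolding Kk_def by (intro exI[of _ k]) simp
    qed
    have top: "filterlim (\<lambda>n. X n \<omega>) at_top sequentially" if up: "\<And>c. \<exists>n. c < X n \<omega>"
      unfolding filterlim_at_top
    proof
      fix Z
      obtain k where k: "Z \<le> Kk k" using kZ by blast
      obtain m where m: "\<omega> \<notin> Ep X (bb (Kk k) m) (Kk k)" using nn(1)[of k] unfolding Np_def by auto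
      obtain j where j: "bb (Kk k) m < X j \<omega>" using up by blast
      show "eventually (\<lambda>n. Z \<le> X n \<omega>) sequentially"
      proof (rule eventually_sequentiallyI[of "Suc j"])
        fix i assume "Suc j \<le> i"
        then have "\<not> X i \<omega> \<le> Kk k" using m j sp unfolding Ep_def by auto
        then show "Z \<le> X i \<omega>" using k by simp
      qed
    qed
    have bot: "filterlim (\<lambda>n. X n \<omega>) at_bot sequentially" if up: "\<And>c. \<exists>n. c < - X n \<omega>"
      unfolding filterlim_at_bot
    proof
      fix Z
      obtain k where k: "- Z \<le> Kk k" using kZ by blast
      obtain m where m: "\<omega> \<notin> Ep (\<lambda>n \<omega>. - X n \<omega>) (bb (Kk k) m) (Kk k)" using nn(2)[of k] unfolding Nn_def by auto
      obtain j where j: "bb (Kk k) m < - X j \<omega>" using up by blast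
      show "eventually (\<lambda>n. X n \<omega> \<le> Z) sequentially"
      proof (rule eventually_sequentiallyI[of "Suc j"])
        fix i assume "Suc j \<le> i"
        then have "\<not> - X i \<omega> \<le> Kk k" using m j sp unfolding Ep_def by auto
        then show "X i \<omega> \<le> Z" using k by simp
      qed
    qed
    show ?case
    proof (cases "\<forall>c. \<exists>n. c < X n \<omega>")
      case True
      then show ?thesis using top by blast
    next
      case False
      then obtain c0 where c0: "\<And>n. X n \<omega> \<le> c0" by (auto simp: not_less)
      have "\<exists>n. c < - X n \<omega>" for c
      proof -
        obtain n where "max c c0 < \<bar>X n \<omega>\<bar>" using big by blast
        then show ?thesis using c0[of n] by (intro exI[of _ n]) (auto simp: abs_if split: if_splits)
      qed
      then show ?thesis using bot by blast
    qed
  qed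
qed

end
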